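(* Let $q$ be an exponential factor, $L=\mathrm{Levels}(q)=\{k_1>\dots>k_m\}$ and $K=\mathrm{slope}(q)$. Then there are homeomorphisms $$\mathbf B(q)\cong(\mathbb C^* )^m\times\mathbb C^N,\qquad \mathbf{SB}(q)\cong(\mathbb C^* )^m\times\mathbb C^M,$$ where $N=|\mathrm{Inc}(L)\cap(0,K]|$ and $M=|\mathrm{Inc}(L)\setminus\mathbb N|$. In particular $\dim\mathbf B(q)=|A(L)\cap(0,K]|$ and $$\dim\mathbf{SB}(q)=|A(L)\setminus\mathbb N|=\sum_{i=1}^m\big(r_ik_i-\lfloor r_{i-1}k_i\rfloor\big),$$ with $r_0=1$ and $r_i$ the lcm of the denominators of $k_1,\dots,k_i$.
   Context: Exponential factors: finite sums $q=\sum_k a_kx^k$, $a_k\in\mathbb C$, $k\in\mathbb Q_{>0}$ (i.e. elements of $\bigcup_{r\ge1}x^{1/r}\mathbb C[x^{1/r}]$). $\mathrm{slope}(q)$ = largest exponent with nonzero coefficient ($0$ if $q=0$); $\mathrm{ram}(q)$ = least $r\ge1$ with $q\in x^{1/r}\mathbb C[x^{1/r}]$. Galois operator $\sigma(\sum a_kx^k)=\sum a_ke^{-2\pi\sqrt{-1}k}x^k$; $\langle q\rangle=\{\sigma^i(q)\}$ has $\mathrm{ram}(q)$ elements. $\mathrm{Levels}(q)=\{\mathrm{slope}(q-\sigma^i(q)):i\in\mathbb Z\}\setminus\{0\}$. Admissible exponents: for $L=\{k_1>\dots>k_m\}\subset\mathbb Q_{>0}$ let $r_i$ be the lcm of the denominators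 (in lowest terms) of $k_1,\dots,k_i$, $A(L)=\mathbb N_{>0}\cup\bigcup_{i=1}^m\big((0,k_i]\cap\tfrac1{r_i}\mathbb N\big)$, and $\mathrm{Inc}(L)=A(L)\setminus L$. Configuration spaces: for a pointed irregular type $Q=[(n_1,q_1),\dots,(n_m,q_m)]$ (with $n_i\in\mathbb N_{>0}$, $q_i$ in distinct Galois orbits), let $r=\mathrm{lcm}_i\mathrm{ram}(q_i)$, $K=\max_i\mathrm{slope}(q_i)$, $s=rK$, and for $\mathbf a=(a_{i,j})\in\mathbb C^{ms}$ set $Q_{\mathbf a}=[(n_i,\sum_{j=1}^sa_{i,j}x^{j/r})]_{i=1}^m$. Then $\mathbf B(Q)=\{\mathbf a\in\mathbb C^{ms}:Q_{\mathbf a}\sim Q\}$ (subspace topology), where $Q'\sim Q$ means same multiplicities and $\mathrm{slope}(\sigma^k(q'_i)-\sigma^l(q'_j))=\mathrm{slope}(\sigma^k(q_i)-\sigma^l(q_j))$ for all $i,j$ and $0\le k\le\mathrm{ram}(q_i)$, $0\le l\le\mathrm{ram}(q_j)$. $\mathbf{SB}(Q)=\{\mathbf a\in\mathbf B(Q):\mathrm{Tr}(Q_{\mathbf a})=0\}$, where the trace is the sum $\sum_i n_i\sum_{t=0}^{\mathrm{ram}(q_i)-1}\sigma^t(q_i)$ of all entries of the associated full list. Here $\mathbf B(q):=\mathbf B([(1,q)])$, $\mathbf{SB}(q):=\mathbf{SB}([(1,q)])$. *)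

theory Defs
  imports "HOL-Analysis.Analysis"
begin

text \<open>An exponential factor is represented by its coefficient function
  q :: rat => complex, q k being the coefficient of x^k.  It has finite support
  contained in the positive rationals.\<close>

definition supp_ef :: "(rat \<Rightarrow> complex) \<Rightarrow> rat set" where
  "supp_ef q = {k. q k \<noteq> 0}"

definition exp_factor :: "(rat \<Rightarrow> complex) \<Rightarrow> bool" where
  "exp_factor q \<longleftrightarrow> finite (supp_ef q) \<and> (\<forall>k \<in> supp_ef q. k > 0)"

definition slope :: "(rat \<Rightarrow> complex) \<Rightarrow> rat" where
  "slope q = (if supp_ef q = {} then 0 else Max (supp_ef q))"

definition ram :: "(rat \<Rightarrow> complex) \<Rightarrow> nat" where
  "ram q = (LEAST r::nat. r \<ge> 1 \<and> (\<forall>k \<in> supp_ef q. k * of_nat r \<in> \<int>))"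

definition sigma :: "(rat \<Rightarrow> complex) \<Rightarrow> (rat \<Rightarrow> complex)" where
  "sigma q = (\<lambda>k. cis (- 2 * pi * of_rat k) * q k)"

definition sigma_pow :: "int \<Rightarrow> (rat \<Rightarrow> complex) \<Rightarrow> (rat \<Rightarrow> complex)" where
  "sigma_pow i q = (\<lambda>k. cis (- 2 * pi * of_int i * of_rat k) * q k)"

definition Levels :: "(rat \<Rightarrow> complex) \<Rightarrow> rat set" where
  "Levels q = {slope (q - sigma_pow i q) | i. True} - {0}"

text \<open>Admissible exponents.  klist L lists L in decreasing order k_1 > ... > k_m;
  rr L i is the lcm of the denominators of k_1, ..., k_i (rr L 0 = 1).\<close>
definition klist :: "rat set \<Rightarrow> rat list" where
  "klist L = rev (sorted_list_of_set L)"

definition rr :: "rat set \<Rightarrow> nat \<Rightarrow> int" where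
  "rr L i = Lcm ((\<lambda>k. snd (quotient_of k)) ` set (take i (klist L)))"

definition A :: "rat set \<Rightarrow> rat set" where
  "A L = {rat_of_nat n | n. n > 0} \<union>
     (\<Union>i \<in> {1..card L}. {x. 0 < x \<and> x \<le> klist L ! (i - 1) \<and>
        (\<exists>n::nat. x = of_nat n / of_int (rr L i))})"

definition Inc :: "rat set \<Rightarrow> rat set" where
  "Inc L = A L - L"

text \<open>Configuration spaces for Q = [(1,q)]: r = ram q, K = slope q, s = rK,
  and a = (a_1,...,a_s) in C^s (extensional functions on {1..s}).\<close>
definition sdim :: "(rat \<Rightarrow> complex) \<Rightarrow> nat" where
  "sdim q = nat \<lfloor>of_nat (ram q) * slope q\<rfloor>"

definition qa :: "(rat \<Rightarrow> complex) \<Rightarrow> (nat \<Rightarrow> complex) \<Rightarrow> (rat \<Rightarrow> complex)" where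
  "qa q a = (\<lambda>k. \<Sum>j\<in>{1..sdim q}. if k = of_nat j / of_nat (ram q) then a j else 0)"

definition B_set :: "(rat \<Rightarrow> complex) \<Rightarrow> (nat \<Rightarrow> complex) set" where
  "B_set q = {a \<in> PiE {1..sdim q} (\<lambda>_. UNIV).
     \<forall>k l::nat. k \<le> ram q \<longrightarrow> l \<le> ram q \<longrightarrow>
       slope (sigma_pow (int k) (qa q a) - sigma_pow (int l) (qa q a))
         = slope (sigma_pow (int k) q - sigma_pow (int l) q)}"

definition trace_ef :: "(rat \<Rightarrow> complex) \<Rightarrow> (rat \<Rightarrow> complex)" where
  "trace_ef p = (\<lambda>k. \<Sum>t<ram p. sigma_pow (int t) p k)"

definition SB_set :: "(rat \<Rightarrow> complex) \<Rightarrow> (nat \<Rightarrow> complex) set" where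
  "SB_set q = {a \<in> B_set q. trace_ef (qa q a) = (\<lambda>_. 0)}"

definition Bspace :: "(rat \<Rightarrow> complex) \<Rightarrow> (nat \<Rightarrow> complex) topology" where
  "Bspace q = subtopology (product_topology (\<lambda>_. euclidean) {1..sdim q}) (B_set q)"

definition SBspace :: "(rat \<Rightarrow> complex) \<Rightarrow> (nat \<Rightarrow> complex) topology" where
  "SBspace q = subtopology (product_topology (\<lambda>_. euclidean) {1..sdim q}) (SB_set q)"

definition CstarC :: "nat \<Rightarrow> nat \<Rightarrow> ((nat \<Rightarrow> complex) \<times> (nat \<Rightarrow> complex)) topology" where
  "CstarC m n = prod_topology
     (product_topology (\<lambda>_. subtopology euclidean (- {0})) {..<m})
     (product_topology (\<lambda>_. euclidean) {..<n})"

end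

theory Submission
  imports Defs
begin

lemma of_rat_Ints_iff: "(of_rat y :: real) \<in> \<int> \<longleftrightarrow> y \<in> \<int>"
proof
  assume "(of_rat y :: real) \<in> \<int>"
  then obtain n where "(of_rat y :: real) = of_int n" by (auto elim: Ints_cases)
  then have "y = of_int n" by (metis of_rat_eq_iff of_rat_of_int_eq)
  then show "y \<in> \<int>" by simp
next
  assume "y \<in> \<int>" then show "(of_rat y :: real) \<in> \<int>" by (auto elim!: Ints_cases)
qed

lemma cis_eq_cis_iff: "cis (- 2 * pi * of_int k * of_rat x) = cis (- 2 * pi * of_int l * of_rat x)
   \<longleftrightarrow> of_int (k - l) * x \<in> \<int>"
proof -
  let ?X = "(of_rat x :: real)"
  have "cis (- 2 * pi * of_int k * ?X) = cis (- 2 * pi * of_int l * ?X)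
     \<longleftrightarrow> sin (- 2 * pi * of_int k * ?X) = sin (- 2 * pi * of_int l * ?X) \<and>
         cos (- 2 * pi * of_int k * ?X) = cos (- 2 * pi * of_int l * ?X)"
    by (auto simp: complex_eq_iff)
  also have "\<dots> \<longleftrightarrow> (\<exists>n::int. - 2 * pi * of_int k * ?X = - 2 * pi * of_int l * ?X + 2 * pi * of_int n)"
    by (rule sin_cos_eq_iff)
  also have "\<dots> \<longleftrightarrow> (\<exists>n::int. of_int (k - l) * ?X = of_int (- n))"
  proof (rule ex_cong1)
    fix n :: int
    have "- 2 * pi * of_int k * ?X = - 2 * pi * of_int l * ?X + 2 * pi * of_int n
       \<longleftrightarrow> (2 * pi) * (of_int (k - l) * ?X) = (2 * pi) * of_int (- n)"
      by (simp add: algebra_simps) linarith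
    also have "\<dots> \<longleftrightarrow> of_int (k - l) * ?X = of_int (- n)"
      by (simp only: mult_cancel_left) simp
    finally show "(- 2 * pi * of_int k * ?X = - 2 * pi * of_int l * ?X + 2 * pi * of_int n)
       = (of_int (k - l) * ?X = of_int (- n))" .
  qed
  also have "\<dots> \<longleftrightarrow> (of_int (k - l) * ?X) \<in> \<int>"
    by (metis Ints_cases Ints_of_int minus_minus)
  also have "(of_int (k - l) * ?X) = of_rat (of_int (k - l) * x)"
    by (simp add: of_rat_mult of_rat_diff)
  finally show ?thesis by (simp add: of_rat_Ints_iff)
qed

definition Fs :: "rat set \<Rightarrow> int \<Rightarrow> rat" where
 "Fs S d = (if {x\<in>S. of_int d * x \<notin> \<int>} = {} then 0 else Max {x\<in>S. of_int d * x \<notin> \<int>})"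

lemma supp_diff: "supp_ef (sigma_pow k p - sigma_pow l p) = {x \<in> supp_ef p. of_int (k - l) * x \<notin> \<int>}"
proof -
  have "\<And>a b c::complex. (a * c - b * c \<noteq> 0) \<longleftrightarrow> c \<noteq> 0 \<and> a \<noteq> b"
    by (metis eq_iff_diff_eq_0 left_diff_distrib mult_eq_0_iff)
  then show ?thesis
    unfolding supp_ef_def sigma_pow_def using cis_eq_cis_iff by auto
qed

lemma slope_diff: "slope (sigma_pow k p - sigma_pow l p) = Fs (supp_ef p) (k - l)"
  unfolding slope_def Fs_def supp_diff by (rule refl)

lemma Fs_in:
  assumes "finite S" "Fs S d \<noteq> 0"
  shows "Fs S d \<in> S \<and> of_int d * Fs S d \<notin> \<int>"
proof -
  have ne: "{x\<in>S. of_int d * x \<notin> \<int>} \<noteq> {}"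
  proof
    assume "{x\<in>S. of_int d * x \<notin> \<int>} = {}"
    then have "Fs S d = 0" unfolding Fs_def by (rule if_P)
    then show False using assms(2) by simp
  qed
  have "Max {x\<in>S. of_int d * x \<notin> \<int>} \<in> {x\<in>S. of_int d * x \<notin> \<int>}"
    using assms(1) ne by (intro Max_in) auto
  then show ?thesis using ne by (simp add: Fs_def)
qed

lemma Fs_ge:
  assumes "finite S" "x \<in> S" "of_int d * x \<notin> \<int>"
  shows "x \<le> Fs S d"
proof -
  have ne: "{x\<in>S. of_int d * x \<notin> \<int>} \<noteq> {}" using assms by auto
  then show ?thesis using assms by (auto simp: Fs_def intro!: Max_ge)
qed

lemma Fs_eqI:
  assumes "finite S" "x \<in> S" "of_int d * x \<notin> \<int>" "\<And>y. y \<in> S \<Longrightarrow> of_int d * y \<notin> \<int> \<Longrightarrow> y \<le> x"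
  shows "Fs S d = x"
proof -
  have ne: "{x\<in>S. of_int d * x \<notin> \<int>} \<noteq> {}" using assms by auto
  then show ?thesis using assms by (auto simp: Fs_def intro!: Max_eqI)
qed

lemma Fs_zeroI:
  assumes "\<And>y. y \<in> S \<Longrightarrow> of_int d * y \<in> \<int>"
  shows "Fs S d = 0"
  using assms by (auto simp: Fs_def)

lemma Fs_pos_cases:
  assumes "finite S" "\<forall>x\<in>S. 0 < x"
  shows "Fs S d = 0 \<longleftrightarrow> (\<forall>y\<in>S. of_int d * y \<in> \<int>)"
proof
  assume F: "Fs S d = 0"
  show "\<forall>y\<in>S. of_int d * y \<in> \<int>"
  proof (rule ccontr)
    assume "\<not> (\<forall>y\<in>S. of_int d * y \<in> \<int>)"
    then obtain y where y: "y \<in> S" "of_int d * y \<notin> \<int>" by blast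
    then have "y \<le> Fs S d" using Fs_ge[OF assms(1)] by blast
    then show False using F y assms(2) by force
  qed
qed (rule Fs_zeroI, blast)

lemma den_dvd_iff: "of_int d * x \<in> (\<int>::rat set) \<longleftrightarrow> snd (quotient_of x) dvd d"
proof -
  obtain p q where pq: "quotient_of x = (p,q)" by (cases "quotient_of x")
  have q0: "q > 0" using quotient_of_denom_pos[OF pq] .
  have cop: "coprime p q" using quotient_of_coprime[OF pq] .
  have x: "x = of_int p / of_int q" using quotient_of_div[OF pq] .
  have "of_int d * x \<in> \<int> \<longleftrightarrow> q dvd d * p"
  proof
    assume "of_int d * x \<in> \<int>" then obtain t where "of_int d * x = of_int t" by (auto elim: Ints_cases)
    then have "of_int (d*p) = (of_int (q*t) :: rat)" using q0 x by (simp add: field_simps)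
    then have "d*p = q*t" by (simp only: of_int_eq_iff)
    then show "q dvd d*p" by simp
  next
    assume "q dvd d*p" then obtain t where t: "d*p = q*t" by (auto elim: dvdE)
    have "of_int d * x = of_int (d*p) / (of_int q :: rat)" using x by simp
    also have "\<dots> = of_int (q*t) / of_int q" using t by simp
    also have "\<dots> = of_int t" using q0 by simp
    finally have "of_int d * x = of_int t" .
    then show "of_int d * x \<in> \<int>" by simp
  qed
  also have "\<dots> \<longleftrightarrow> q dvd d" using cop
    by (metis coprime_commute coprime_dvd_mult_left_iff)
  finally show ?thesis using pq by simp
qed

lemma levels_fs:
  assumes "finite S" "\<forall>x\<in>S. 0 < x" "Lv = {Fs S d | d. True} - {0}"
  shows "Lv \<subseteq> S" "Fs Lv d = Fs S d"
proof -
  show sub: "Lv \<subseteq> S" using assms Fs_in by blast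
  show "Fs Lv d = Fs S d"
  proof (cases "Fs S d = 0")
    case True
    then have "\<forall>y\<in>S. of_int d * y \<in> \<int>" using Fs_pos_cases assms by blast
    then show ?thesis using True sub by (auto intro!: Fs_zeroI)
  next
    case False
    have fl: "finite Lv" using sub assms(1) finite_subset by blast
    have "Fs S d \<in> Lv" using False assms(3) by blast
    then show ?thesis using False Fs_in[OF assms(1) False] fl sub Fs_ge[OF assms(1)]
      by (intro Fs_eqI) auto
  qed
qed

definition Adm :: "rat set \<Rightarrow> rat \<Rightarrow> bool" where
  "Adm Lv x \<longleftrightarrow> (\<forall>d::int. of_int d * x \<notin> \<int> \<longrightarrow> (\<exists>\<mu>\<in>Lv. x \<le> \<mu> \<and> of_int d * \<mu> \<notin> \<int>))"

lemma key_char: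
  assumes "finite S'" "\<forall>x\<in>S'. 0 < x" "finite Lv" "\<forall>x\<in>Lv. 0 < x"
    and att: "\<forall>l\<in>Lv. \<exists>d. Fs Lv d = l"
  shows "(\<forall>d. Fs S' d = Fs Lv d) \<longleftrightarrow> Lv \<subseteq> S' \<and> (\<forall>x\<in>S'. Adm Lv x)"
proof
  assume H: "\<forall>d. Fs S' d = Fs Lv d"
  show "Lv \<subseteq> S' \<and> (\<forall>x\<in>S'. Adm Lv x)"
  proof
    show "Lv \<subseteq> S'"
    proof
      fix l assume l: "l \<in> Lv"
      then obtain d where d: "Fs Lv d = l" using att by blast
      have "l \<noteq> 0" using l assms(4) by auto
      then show "l \<in> S'" using Fs_in[OF assms(1), of d] H d by auto
    qed
    show "\<forall>x\<in>S'. Adm Lv x"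
      unfolding Adm_def
    proof (intro ballI allI impI)
      fix x d assume x: "x \<in> S'" and dx: "of_int d * x \<notin> \<int>"
      have "x \<le> Fs S' d" using Fs_ge[OF assms(1) x dx] .
      then have ge: "x \<le> Fs Lv d" using H by simp
      then have "Fs Lv d \<noteq> 0" using x assms(2) by force
      then show "\<exists>\<mu>\<in>Lv. x \<le> \<mu> \<and> of_int d * \<mu> \<notin> \<int>" using Fs_in[OF assms(3)] ge by blast
    qed
  qed
next
  assume H: "Lv \<subseteq> S' \<and> (\<forall>x\<in>S'. Adm Lv x)"
  show "\<forall>d. Fs S' d = Fs Lv d"
  proof
    fix d
    show "Fs S' d = Fs Lv d"
    proof (cases "Fs S' d = 0")
      case True
      then have "\<forall>y\<in>S'. of_int d * y \<in> \<int>" using Fs_pos_cases assms by blast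
      then have "Fs Lv d = 0" using H by (intro Fs_zeroI) auto
      then show ?thesis using True by simp
    next
      case False
      note M = Fs_in[OF assms(1) False]
      then obtain \<mu> where mu: "\<mu> \<in> Lv" "Fs S' d \<le> \<mu>" "of_int d * \<mu> \<notin> \<int>"
        using H unfolding Adm_def by blast
      have "\<mu> \<le> Fs S' d" using Fs_ge[OF assms(1) _ mu(3)] mu(1) H by blast
      then have "\<mu> = Fs S' d" using mu by simp
      then show ?thesis using mu H M Fs_ge[OF assms(1)]
        by (intro Fs_eqI[symmetric, OF assms(3)]) auto
    qed
  qed
qed

abbreviation den :: "rat \<Rightarrow> int" where "den x \<equiv> snd (quotient_of x)"

lemma den_pos: "den x > 0"
  by (metis prod.collapse quotient_of_denom_pos)

lemma rr_pos: "finite L \<Longrightarrow> rr L i > 0"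
proof -
  have "0 \<notin> (\<lambda>k. den k) ` set (take i (klist L))" using den_pos by (metis image_iff less_irrefl)
  then have "Lcm ((\<lambda>k. den k) ` set (take i (klist L))) \<noteq> 0"
    by (subst Lcm_0_iff) auto
  moreover have "Lcm ((\<lambda>k. den k) ` set (take i (klist L))) \<ge> (0::int)" by simp
  ultimately show ?thesis unfolding rr_def by linarith
qed

lemma klist_props:
  assumes "finite L"
  shows "set (klist L) = L" "length (klist L) = card L" "distinct (klist L)"
    "\<And>i j. i < j \<Longrightarrow> j < length (klist L) \<Longrightarrow> klist L ! j < klist L ! i"
proof -
  show "set (klist L) = L" "length (klist L) = card L" "distinct (klist L)"
    using assms by (auto simp: klist_def)
  have "sorted_wrt (<) (sorted_list_of_set L)" using assms by (simp add: strict_sorted_list_of_set)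
  then have "sorted_wrt (\<lambda>x y. y < x) (klist L)" by (simp add: klist_def sorted_wrt_rev)
  then show "\<And>i j. i < j \<Longrightarrow> j < length (klist L) \<Longrightarrow> klist L ! j < klist L ! i"
    using sorted_wrt_nth_less by fastforce
qed

lemma klist_mono:
  assumes "finite L" "i \<le> j" "j < length (klist L)"
  shows "klist L ! j \<le> klist L ! i"
  using klist_props(4)[OF assms(1), of i j] assms by (cases "i = j") auto

lemma A_char:
  assumes "finite L" "0 < x"
  shows "x \<in> A L \<longleftrightarrow> (x \<in> \<int> \<or> (\<exists>j\<in>{1..card L}. x \<le> klist L ! (j-1) \<and> den x dvd rr L j))"
proof -
  have nat: "x \<in> {rat_of_nat n | n. n > 0} \<longleftrightarrow> x \<in> \<int>"
  proof
    assume "x \<in> \<int>" then obtain t where t: "x = of_int t" by (auto elim: Ints_cases)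
    then have "t > 0" using assms by simp
    then have "x = rat_of_nat (nat t) \<and> nat t > 0" using t by simp
    then show "x \<in> {rat_of_nat n | n. n > 0}" by blast
  qed auto
  have j: "(\<exists>n::nat. x = of_nat n / of_int (rr L j)) \<longleftrightarrow> den x dvd rr L j" for j
  proof
    assume "\<exists>n::nat. x = of_nat n / of_int (rr L j)"
    then obtain n :: nat where "x = of_nat n / of_int (rr L j)" by blast
    then have "of_int (rr L j) * x = of_nat n" using rr_pos[OF assms(1), of j] by simp
    then have "of_int (rr L j) * x \<in> \<int>" by simp
    then show "den x dvd rr L j" by (simp add: den_dvd_iff)
  next
    assume "den x dvd rr L j"
    then have "of_int (rr L j) * x \<in> \<int>" by (simp add: den_dvd_iff)
    then obtain t where t: "of_int (rr L j) * x = of_int t" by (auto elim: Ints_cases)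
    have rp: "rr L j > 0" using rr_pos[OF assms(1)] .
    then have "t > 0" using t assms(2)
      by (metis of_int_0_less_iff zero_less_mult_iff)
    have "x = of_int t / of_int (rr L j)" using t rp by (simp add: field_simps)
    then have "x = of_nat (nat t) / of_int (rr L j)" using \<open>t > 0\<close> by simp
    then show "\<exists>n::nat. x = of_nat n / of_int (rr L j)" by blast
  qed
  have "x \<in> A L \<longleftrightarrow> x \<in> {rat_of_nat n | n. n > 0} \<or>
     (\<exists>j\<in>{1..card L}. x \<le> klist L ! (j-1) \<and> (\<exists>n::nat. x = of_nat n / of_int (rr L j)))"
    unfolding A_def using assms(2) by auto
  then show ?thesis by (simp only: nat j)
qed

lemma Adm_iff_A:
  assumes "finite L" "0 < x"
  shows "Adm L x \<longleftrightarrow> x \<in> A L"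
proof -
  define kl where "kl = klist L"
  define i where "i = length (takeWhile (\<lambda>\<mu>. x \<le> \<mu>) kl)"
  note kp = klist_props[OF assms(1), folded kl_def]
  have ile: "i \<le> length kl" unfolding i_def by (rule length_takeWhile_le)
  have notP: "i < length kl \<Longrightarrow> \<not> x \<le> kl ! i"
    unfolding i_def by (rule nth_length_takeWhile)
  have tk: "takeWhile (\<lambda>\<mu>. x \<le> \<mu>) kl = take i kl" unfolding i_def by (rule takeWhile_eq_take)
  have set_take: "set (take i kl) = {\<mu>\<in>L. x \<le> \<mu>}"
  proof
    show "set (take i kl) \<subseteq> {\<mu>\<in>L. x \<le> \<mu>}"
      using set_takeWhileD kp(1) tk by (metis (no_types, lifting) mem_Collect_eq subsetI)
    show "{\<mu>\<in>L. x \<le> \<mu>} \<subseteq> set (take i kl)"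
    proof
      fix \<mu> assume mu: "\<mu> \<in> {\<mu>\<in>L. x \<le> \<mu>}"
      then obtain t where t: "t < length kl" "\<mu> = kl ! t" using kp(1) by (metis in_set_conv_nth mem_Collect_eq)
      show "\<mu> \<in> set (take i kl)"
      proof (cases "t < i")
        case True then show ?thesis using t by (metis in_set_conv_nth length_take min_less_iff_conj nth_take)
      next
        case False
        then have "i < length kl" using t by simp
        then have "\<not> x \<le> kl ! i" using notP by simp
        moreover have "kl ! t \<le> kl ! i" using klist_mono[OF assms(1), of i t] False t kl_def by simp
        ultimately show ?thesis using mu t by simp
      qed
    qed
  qed
  have rri: "rr L i = Lcm (den ` {\<mu>\<in>L. x \<le> \<mu>})"
    unfolding rr_def using set_take kl_def by simp
  have e: "\<And>d. (\<forall>\<mu>\<in>L. x \<le> \<mu> \<longrightarrow> of_int d * \<mu> \<in> \<int>) \<longleftrightarrow> rr L i dvd d"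
    unfolding rri Lcm_dvd_iff by (auto simp: den_dvd_iff)
  have "Adm L x \<longleftrightarrow> (\<forall>d::int. rr L i dvd d \<longrightarrow> of_int d * x \<in> \<int>)"
    unfolding Adm_def e[symmetric] by blast
  also have "\<dots> \<longleftrightarrow> (\<forall>d::int. rr L i dvd d \<longrightarrow> den x dvd d)"
    by (simp add: den_dvd_iff)
  also have "\<dots> \<longleftrightarrow> den x dvd rr L i" by (meson dvd_refl dvd_trans)
  finally have adm: "Adm L x \<longleftrightarrow> den x dvd rr L i" .
  show ?thesis
  proof
    assume "Adm L x"
    then have dv: "den x dvd rr L i" using adm by simp
    show "x \<in> A L"
    proof (cases "i = 0")
      case True
      then have "rr L i = 1" by (simp add: rr_def)
      then have "of_int 1 * x \<in> \<int>" using dv den_dvd_iff by metis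
      then show ?thesis using A_char[OF assms] by simp
    next
      case False
      then have "i - 1 < length (takeWhile (\<lambda>\<mu>. x \<le> \<mu>) kl)" using i_def by simp
      then have "x \<le> kl ! (i - 1)"
        by (metis nth_mem set_takeWhileD takeWhile_nth)
      moreover have "i \<in> {1..card L}" using False ile kp(2) by simp
      ultimately show ?thesis using A_char[OF assms] dv kl_def by blast
    qed
  next
    assume "x \<in> A L"
    then consider "x \<in> \<int>" | j where "j\<in>{1..card L}" "x \<le> kl ! (j-1)" "den x dvd rr L j"
      using A_char[OF assms] kl_def by blast
    then show "Adm L x"
    proof cases
      case 1
      then have "den x dvd 1" using den_dvd_iff[of 1 x] by simp
      then show ?thesis using adm by (meson dvd_trans one_dvd)
    next
      case 2
      have "j \<le> i"
      proof (rule ccontr)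
        assume "\<not> j \<le> i"
        then have "i < length kl" using 2 kp(2) by simp
        then have "\<not> x \<le> kl ! i" using notP by simp
        moreover have "kl ! (j-1) \<le> kl ! i" using klist_mono[OF assms(1), of i "j-1"] \<open>\<not> j \<le> i\<close> 2 kp(2) kl_def
          by simp
        ultimately show False using 2 by simp
      qed
      then have "rr L j dvd rr L i" unfolding rr_def kl_def[symmetric]
        by (intro Lcm_subset image_mono set_take_subset_set_take)
      then show ?thesis using adm 2 dvd_trans by blast
    qed
  qed
qed

lemma prod_homeo:
  fixes P Lj Fj :: "nat set" and X :: "nat \<Rightarrow> complex set"
  assumes fin: "finite P" and sub: "Lj \<subseteq> P" "Fj \<subseteq> P" and disj: "Lj \<inter> Fj = {}"
    and XL: "\<And>j. j \<in> Lj \<Longrightarrow> X j = - {0}"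
    and XF: "\<And>j. j \<in> Fj \<Longrightarrow> X j = UNIV"
    and XZ: "\<And>j. j \<in> P \<Longrightarrow> j \<notin> Lj \<Longrightarrow> j \<notin> Fj \<Longrightarrow> X j = {0}"
  shows "subtopology (product_topology (\<lambda>_. euclidean) P) (PiE P X)
           homeomorphic_space CstarC (card Lj) (card Fj)"
proof -
  define m where "m = card Lj"
  define n where "n = card Fj"
  obtain gL where gL: "bij_betw gL {..<m} Lj"
    using ex_bij_betw_nat_finite[of Lj] fin sub finite_subset unfolding m_def
    by (metis atLeast0LessThan)
  obtain gF where gF: "bij_betw gF {..<n} Fj"
    using ex_bij_betw_nat_finite[of Fj] fin sub finite_subset unfolding n_def
    by (metis atLeast0LessThan)
  define hL where "hL = inv_into {..<m} gL"
  define hF where "hF = inv_into {..<n} gF"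
  have hL: "\<And>j. j \<in> Lj \<Longrightarrow> hL j \<in> {..<m} \<and> gL (hL j) = j"
    using gL unfolding hL_def by (meson bij_betw_inv_into_right bij_betwE bij_betw_inv_into)
  have hL2: "\<And>i. i \<in> {..<m} \<Longrightarrow> hL (gL i) = i \<and> gL i \<in> Lj"
    using gL unfolding hL_def by (meson bij_betw_inv_into_left bij_betwE)
  have hF: "\<And>j. j \<in> Fj \<Longrightarrow> hF j \<in> {..<n} \<and> gF (hF j) = j"
    using gF unfolding hF_def by (meson bij_betw_inv_into_right bij_betwE bij_betw_inv_into)
  have hF2: "\<And>i. i \<in> {..<n} \<Longrightarrow> hF (gF i) = i \<and> gF i \<in> Fj"
    using gF unfolding hF_def by (meson bij_betw_inv_into_left bij_betwE)
  let ?X = "product_topology (\<lambda>j. subtopology euclidean (X j)) P"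
  let ?Y = "CstarC m n"
  have eqX: "subtopology (product_topology (\<lambda>_. euclidean) P) (PiE P X) = ?X"
    by (rule subtopology_product_topology)
  define f where "f = (\<lambda>a::nat\<Rightarrow>complex. (restrict (\<lambda>i. a (gL i)) {..<m}, restrict (\<lambda>i. a (gF i)) {..<n}))"
  define g where "g = (\<lambda>(u::nat\<Rightarrow>complex,v::nat\<Rightarrow>complex). restrict (\<lambda>j. if j \<in> Lj then u (hL j) else if j \<in> Fj then v (hF j) else 0) P)"
  have tX: "topspace ?X = PiE P X" by simp
  have tY: "topspace ?Y = PiE {..<m} (\<lambda>_. - {0}) \<times> PiE {..<n} (\<lambda>_. UNIV)"
    by (simp add: CstarC_def)
  have cf: "continuous_map ?X ?Y f"
    unfolding f_def CstarC_def
  proof (intro continuous_map_pairedI)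
    show "continuous_map ?X (product_topology (\<lambda>_. subtopology euclidean (- {0})) {..<m})
        (\<lambda>x. restrict (\<lambda>i. x (gL i)) {..<m})"
      unfolding continuous_map_componentwise
    proof (intro conjI ballI)
      fix k assume k: "k \<in> {..<m}"
      have "continuous_map ?X (subtopology euclidean (X (gL k))) (\<lambda>x. x (gL k))"
        using k hL2 sub by (intro continuous_map_product_projection) auto
      then have "continuous_map ?X (subtopology euclidean (- {0})) (\<lambda>x. x (gL k))"
        using XL hL2 k by simp
      then show "continuous_map ?X (subtopology euclidean (- {0})) (\<lambda>x. restrict (\<lambda>i. x (gL i)) {..<m} k)"
        using k by simp
    qed auto
    show "continuous_map ?X (product_topology (\<lambda>_. euclidean) {..<n})
        (\<lambda>x. restrict (\<lambda>i. x (gF i)) {..<n})"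
      unfolding continuous_map_componentwise
    proof (intro conjI ballI)
      fix k assume k: "k \<in> {..<n}"
      have "continuous_map ?X (subtopology euclidean (X (gF k))) (\<lambda>x. x (gF k))"
        using k hF2 sub by (intro continuous_map_product_projection) auto
      then have "continuous_map ?X euclidean (\<lambda>x. x (gF k))"
        using XF hF2 k by simp
      then show "continuous_map ?X euclidean (\<lambda>x. restrict (\<lambda>i. x (gF i)) {..<n} k)"
        using k by simp
    qed auto
  qed
  have cg: "continuous_map ?Y ?X g"
    unfolding continuous_map_componentwise
  proof (intro conjI ballI)
    show "g ` topspace ?Y \<subseteq> extensional P" unfolding g_def by auto
    fix j assume j: "j \<in> P"
    consider "j \<in> Lj" | "j \<in> Fj" | "j \<notin> Lj" "j \<notin> Fj" by blast
    then show "continuous_map ?Y (subtopology euclidean (X j)) (\<lambda>x. g x j)"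
    proof cases
      case 1
      have "continuous_map ?Y (product_topology (\<lambda>_. subtopology euclidean (- {0})) {..<m}) fst"
        unfolding CstarC_def by (rule continuous_map_fst)
      then have "continuous_map ?Y (subtopology euclidean (- {0})) (\<lambda>y. fst y (hL j))"
        using continuous_map_product_projection[of "hL j" "{..<m}" "\<lambda>_. subtopology euclidean (- {0})"] hL[OF 1]
          continuous_map_compose[unfolded o_def] by blast
      then show ?thesis using 1 j XL unfolding g_def by (auto simp: case_prod_beta)
    next
      case 2
      have "continuous_map ?Y (product_topology (\<lambda>_. euclidean) {..<n}) snd"
        unfolding CstarC_def by (rule continuous_map_snd)
      then have "continuous_map ?Y euclidean (\<lambda>y. snd y (hF j))"
        using continuous_map_product_projection[of "hF j" "{..<n}" "\<lambda>_. euclidean"] hF[OF 2]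
          continuous_map_compose[unfolded o_def] by blast
      then show ?thesis using 2 j XF disj unfolding g_def by (auto simp: case_prod_beta)
    next
      case 3
      have "continuous_map ?Y (subtopology euclidean (X j)) (\<lambda>y. 0)"
        using XZ[OF j 3] by simp
      then show ?thesis using 3 j unfolding g_def by (auto simp: case_prod_beta)
    qed
  qed
  have gf: "\<forall>x\<in>topspace ?X. g (f x) = x"
  proof
    fix x assume x: "x \<in> topspace ?X"
    then have xP: "x \<in> PiE P X" by simp
    show "g (f x) = x"
    proof
      fix j
      show "g (f x) j = x j"
      proof (cases "j \<in> P")
        case False then show ?thesis using xP unfolding g_def f_def by (auto simp: PiE_def extensional_def)
      next
        case True
        consider "j \<in> Lj" | "j \<in> Fj" | "j \<notin> Lj" "j \<notin> Fj" by blast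
        then show ?thesis
        proof cases
          case 1 then show ?thesis using True hL unfolding g_def f_def by auto
        next
          case 2 then show ?thesis using True hF disj unfolding g_def f_def by auto
        next
          case 3 then show ?thesis using True XZ[OF True 3] xP unfolding g_def f_def by (auto simp: PiE_iff)
        qed
      qed
    qed
  qed
  have fg: "\<forall>y\<in>topspace ?Y. f (g y) = y"
  proof
    fix y assume y: "y \<in> topspace ?Y"
    obtain u v where uv: "y = (u, v)" by (cases y)
    have u: "u \<in> PiE {..<m} (\<lambda>_. - {0})" and v: "v \<in> PiE {..<n} (\<lambda>_. UNIV)" using y uv tY by auto
    have "restrict (\<lambda>i. g (u,v) (gL i)) {..<m} = u"
    proof
      fix i show "restrict (\<lambda>i. g (u,v) (gL i)) {..<m} i = u i"
        using hL2[of i] sub u unfolding g_def by (cases "i < m") (auto simp: PiE_def extensional_def)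
    qed
    moreover have "restrict (\<lambda>i. g (u,v) (gF i)) {..<n} = v"
    proof
      fix i show "restrict (\<lambda>i. g (u,v) (gF i)) {..<n} i = v i"
        using hF2[of i] sub v disj unfolding g_def by (cases "i < n") (auto simp: PiE_def extensional_def)
    qed
    ultimately show "f (g y) = y" unfolding f_def uv by simp
  qed
  have "homeomorphic_maps ?X ?Y f g"
    unfolding homeomorphic_maps_def using cf cg gf fg by blast
  then have "?X homeomorphic_space ?Y" unfolding homeomorphic_space_def by blast
  then show ?thesis by (simp only: eqX m_def n_def)
qed

lemma card_G:
  fixes R :: int and k :: rat
  assumes "R > 0"
  shows "finite {x::rat. 0 < x \<and> x \<le> k \<and> of_int R * x \<in> \<int>}"
    "card {x::rat. 0 < x \<and> x \<le> k \<and> of_int R * x \<in> \<int>} = nat \<lfloor>of_int R * k\<rfloor>"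
proof -
  have eq: "{x::rat. 0 < x \<and> x \<le> k \<and> of_int R * x \<in> \<int>} = (\<lambda>n::int. of_int n / of_int R) ` {1..\<lfloor>of_int R * k\<rfloor>}"
  proof (intro set_eqI iffI)
    fix x assume "x \<in> {x::rat. 0 < x \<and> x \<le> k \<and> of_int R * x \<in> \<int>}"
    then have x: "0 < x" "x \<le> k" "of_int R * x \<in> \<int>" by auto
    then obtain t where t: "of_int R * x = of_int t" by (auto elim: Ints_cases)
    have "(0::rat) < of_int R * x" using x assms by simp
    then have t0: "t > 0" using t by simp
    have "of_int R * x \<le> of_int R * k" using x assms by (simp add: mult_left_mono)
    then have "t \<le> \<lfloor>of_int R * k\<rfloor>" using t by (simp add: le_floor_iff)
    moreover have "x = of_int t / of_int R" using t assms by (simp add: field_simps)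
    ultimately show "x \<in> (\<lambda>n::int. of_int n / of_int R) ` {1..\<lfloor>of_int R * k\<rfloor>}"
      using t0 by (intro image_eqI[where x=t]) auto
  next
    fix x :: rat assume "x \<in> (\<lambda>n::int. of_int n / of_int R) ` {1..\<lfloor>of_int R * k\<rfloor>}"
    then obtain n where n: "1 \<le> n" "n \<le> \<lfloor>of_int R * k\<rfloor>" "x = of_int n / of_int R" by auto
    have "(of_int n :: rat) \<le> of_int R * k" using n(2) by (simp add: le_floor_iff)
    then have "x \<le> k" using n(3) assms by (simp add: divide_le_eq mult.commute)
    moreover have "0 < x" using n assms by simp
    moreover have "of_int R * x \<in> \<int>" using n(3) assms by simp
    ultimately show "x \<in> {x::rat. 0 < x \<and> x \<le> k \<and> of_int R * x \<in> \<int>}" by simp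
  qed
  have inj: "inj_on (\<lambda>n::int. (of_int n :: rat) / of_int R) {1..\<lfloor>of_int R * k\<rfloor>}"
    using assms by (auto simp: inj_on_def)
  show "finite {x::rat. 0 < x \<and> x \<le> k \<and> of_int R * x \<in> \<int>}" unfolding eq by simp
  show "card {x::rat. 0 < x \<and> x \<le> k \<and> of_int R * x \<in> \<int>} = nat \<lfloor>of_int R * k\<rfloor>"
    unfolding eq card_image[OF inj] by simp
qed

lemma dvd_Ints: "a dvd b \<Longrightarrow> of_int a * x \<in> (\<int>::rat set) \<Longrightarrow> of_int b * x \<in> \<int>"
  by (meson den_dvd_iff dvd_trans)

lemma pos_Ints_Nats: "(0::rat) < x \<Longrightarrow> x \<in> \<nat> \<longleftrightarrow> x \<in> \<int>"
proof
  assume "0 < x" "x \<in> \<int>"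
  then obtain t where t: "x = of_int t" by (auto elim: Ints_cases)
  then have "t \<ge> 0" using \<open>0 < x\<close> by simp
  then have "x = of_nat (nat t)" using t by simp
  then show "x \<in> \<nat>" by simp
qed (simp add: Nats_subset_Ints[THEN subsetD])

lemma rr_mono: "i \<le> j \<Longrightarrow> rr L i dvd rr L j"
  unfolding rr_def by (intro Lcm_subset image_mono set_take_subset_set_take)

lemma rr_0: "rr L 0 = 1" by (simp add: rr_def)

lemma A_pos: "x \<in> A L \<Longrightarrow> 0 < x"
  unfolding A_def by auto

lemma count_formula:
  assumes fin: "finite L" and pos: "\<forall>x\<in>L. 0 < x"
  shows "rat_of_nat (card (A L - \<nat>)) = (\<Sum>i = 1..card L. of_int (rr L i) * klist L ! (i - 1)
                         - of_int \<lfloor>of_int (rr L (i - 1)) * klist L ! (i - 1)\<rfloor>)"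
proof -
  define m where "m = card L"
  define kl where "kl = klist L"
  define k where "k i = kl ! (i - 1)" for i
  define R where "R i = rr L i" for i
  note kp = klist_props[OF fin, folded kl_def]
  have Rpos: "R i > 0" for i unfolding R_def using rr_pos[OF fin] .
  have kin: "k i \<in> L" if i: "i \<in> {1..m}" for i
  proof -
    have "i - 1 < length kl" using i kp(2) m_def by auto
    then have "kl ! (i - 1) \<in> set kl" by (rule nth_mem)
    then show ?thesis using kp(1) k_def by simp
  qed
  have kpos: "i \<in> {1..m} \<Longrightarrow> 0 < k i" for i using kin pos by blast
  have kdec: "k j < k i" if ij: "i \<in> {1..m}" "j \<in> {1..m}" "i < j" for i j
  proof -
    have "i - 1 < j - 1" "j - 1 < length kl" using ij kp(2) m_def by auto
    then show ?thesis unfolding k_def by (rule kp(4))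
  qed
  have kden: "i \<in> {1..m} \<Longrightarrow> of_int (R i) * k i \<in> \<int>" for i
  proof -
    assume i: "i \<in> {1..m}"
    have "take i kl ! (i - 1) = kl ! (i - 1)" using i by simp
    moreover have "i - 1 < length (take i kl)" using i kp(2) m_def by simp
    ultimately have "k i \<in> set (take i kl)" unfolding k_def by (metis nth_mem)
    then have "den (k i) dvd R i" unfolding R_def rr_def kl_def[symmetric] by (intro dvd_Lcm) simp
    then show ?thesis by (simp add: den_dvd_iff)
  qed
  define G where "G R' kk = {x::rat. 0 < x \<and> x \<le> kk \<and> of_int R' * x \<in> \<int>}" for R' kk
  define E where "E i = G (R i) (k i) - G (R (i - 1)) (k i)" for i
  have Gfin: "finite (G (R i) kk)" for i kk unfolding G_def using card_G(1)[OF Rpos] .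
  have Gsub: "G (R (i - 1)) (k i) \<subseteq> G (R i) (k i)" for i
    unfolding G_def using dvd_Ints[OF rr_mono[of "i - 1" i L]] R_def by auto
  have Achar: "x \<in> A L - \<nat> \<longleftrightarrow> 0 < x \<and> x \<notin> \<int> \<and> (\<exists>j\<in>{1..m}. x \<le> k j \<and> of_int (R j) * x \<in> \<int>)" for x
  proof (cases "0 < x")
    case True
    show ?thesis using A_char[OF fin True] pos_Ints_Nats[OF True] True
      unfolding m_def k_def kl_def R_def by (auto simp: den_dvd_iff)
  next
    case False then show ?thesis using A_pos by auto
  qed
  have U: "A L - \<nat> = (\<Union>i\<in>{1..m}. E i)"
  proof (intro set_eqI iffI)
    fix x assume "x \<in> A L - \<nat>"
    then have x: "0 < x" "x \<notin> \<int>" and ex: "\<exists>j. j \<in> {1..m} \<and> x \<le> k j \<and> of_int (R j) * x \<in> \<int>"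
      using Achar by auto
    define i where "i = (LEAST j. j \<in> {1..m} \<and> x \<le> k j \<and> of_int (R j) * x \<in> \<int>)"
    have i: "i \<in> {1..m}" "x \<le> k i" "of_int (R i) * x \<in> \<int>"
      using LeastI_ex[OF ex] unfolding i_def by auto
    have "of_int (R (i - 1)) * x \<notin> \<int>"
    proof
      assume h: "of_int (R (i - 1)) * x \<in> \<int>"
      show False
      proof (cases "i = 1")
        case True then show False using h x by (simp add: R_def rr_0)
      next
        case False
        then have i1: "i - 1 \<in> {1..m}" using i by auto
        have "k i < k (i - 1)" using kdec[OF i1 i(1)] False i by simp
        then have "x \<le> k (i - 1)" using i by simp
        then have "(LEAST j. j \<in> {1..m} \<and> x \<le> k j \<and> of_int (R j) * x \<in> \<int>) \<le> i - 1"
          using i1 h by (intro Least_le) simp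
        then have "i \<le> i - 1" unfolding i_def .
        then show False using i(1) by auto
      qed
    qed
    then have "x \<in> E i" unfolding E_def G_def using x i by simp
    then show "x \<in> (\<Union>i\<in>{1..m}. E i)" using i by blast
  next
    fix x assume "x \<in> (\<Union>i\<in>{1..m}. E i)"
    then obtain i where i: "i \<in> {1..m}" "x \<in> E i" by blast
    then have x: "0 < x" "x \<le> k i" "of_int (R i) * x \<in> \<int>" "of_int (R (i - 1)) * x \<notin> \<int>"
      unfolding E_def G_def by auto
    have "x \<notin> \<int>"
    proof
      assume "x \<in> \<int>" then have "of_int (R (i - 1)) * x \<in> \<int>" by simp
      then show False using x by simp
    qed
    then show "x \<in> A L - \<nat>" using Achar x i by blast
  qed
  have disj: "E i \<inter> E j = {}" if "i \<in> {1..m}" "j \<in> {1..m}" "i \<noteq> j" for i j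
  proof -
    have *: "E a \<inter> E b = {}" if ab: "a \<in> {1..m}" "b \<in> {1..m}" "a < b" for a b
    proof -
      have "R a dvd R (b - 1)" unfolding R_def using ab by (intro rr_mono) simp
      then show ?thesis unfolding E_def G_def using dvd_Ints by blast
    qed
    show ?thesis using that *[of i j] *[of j i] by (cases "i < j") (auto simp: Int_commute)
  qed
  have cardE: "rat_of_nat (card (E i)) = of_int (R i) * k i - of_int \<lfloor>of_int (R (i - 1)) * k i\<rfloor>"
    if i: "i \<in> {1..m}" for i
  proof -
    have c1: "card (G (R i) (k i)) = nat \<lfloor>of_int (R i) * k i\<rfloor>" unfolding G_def using card_G(2)[OF Rpos] .
    have c2: "card (G (R (i - 1)) (k i)) = nat \<lfloor>of_int (R (i - 1)) * k i\<rfloor>" unfolding G_def using card_G(2)[OF Rpos] .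
    have le: "card (G (R (i - 1)) (k i)) \<le> card (G (R i) (k i))" using Gsub Gfin by (intro card_mono)
    have "card (E i) = card (G (R i) (k i)) - card (G (R (i - 1)) (k i))"
      unfolding E_def using Gsub Gfin by (intro card_Diff_subset) (auto intro: finite_subset)
    then have "rat_of_nat (card (E i)) = of_nat (card (G (R i) (k i))) - of_nat (card (G (R (i - 1)) (k i)))"
      using le by simp
    also have "\<dots> = of_int \<lfloor>of_int (R i) * k i\<rfloor> - of_int \<lfloor>of_int (R (i - 1)) * k i\<rfloor>"
    proof -
      have "0 \<le> of_int (R i) * k i" "0 \<le> of_int (R (i - 1)) * k i"
        using kpos[OF i] Rpos[of i] Rpos[of "i - 1"] by simp_all
      then show ?thesis unfolding c1 c2 by simp
    qed
    also have "of_int \<lfloor>of_int (R i) * k i\<rfloor> = of_int (R i) * k i"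
      using kden[OF i] by (metis Ints_cases floor_of_int)
    finally show ?thesis .
  qed
  have finE: "finite (E i)" for i unfolding E_def using Gfin by simp
  have "card (A L - \<nat>) = (\<Sum>i\<in>{1..m}. card (E i))"
    unfolding U using finE disj by (intro card_UN_disjoint) auto
  then have "rat_of_nat (card (A L - \<nat>)) = (\<Sum>i\<in>{1..m}. rat_of_nat (card (E i)))" by simp
  also have "\<dots> = (\<Sum>i = 1..m. of_int (R i) * k i - of_int \<lfloor>of_int (R (i - 1)) * k i\<rfloor>)"
    using cardE by (intro sum.cong) auto
  finally show ?thesis unfolding m_def k_def R_def kl_def .
qed

lemma ram_props:
  assumes "finite (supp_ef p)"
  shows "ram p \<ge> 1" "\<forall>k\<in>supp_ef p. k * of_nat (ram p) \<in> \<int>"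
proof -
  define w where "w = nat (\<Prod>k\<in>supp_ef p. den k)"
  have pp: "(\<Prod>k\<in>supp_ef p. den k) > 0" using den_pos by (intro prod_pos) (simp add: less_imp_le)
  then have w1: "w \<ge> 1" unfolding w_def by simp
  have "\<forall>k\<in>supp_ef p. k * of_nat w \<in> \<int>"
  proof
    fix k assume k: "k \<in> supp_ef p"
    have "den k dvd (\<Prod>k\<in>supp_ef p. den k)" using assms k by (rule dvd_prodI)
    then have "of_int (\<Prod>k\<in>supp_ef p. den k) * k \<in> \<int>" by (simp only: den_dvd_iff)
    moreover have "(of_nat w :: rat) = of_int (\<Prod>k\<in>supp_ef p. den k)" unfolding w_def using pp
      by (metis of_int_of_nat_eq order_less_imp_le int_nat_eq)
    ultimately show "k * of_nat w \<in> \<int>" by (simp only: mult.commute)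
  qed
  then have ex: "\<exists>r::nat. r \<ge> 1 \<and> (\<forall>k \<in> supp_ef p. k * of_nat r \<in> \<int>)" using w1 by blast
  show "ram p \<ge> 1" "\<forall>k\<in>supp_ef p. k * of_nat (ram p) \<in> \<int>"
    using LeastI_ex[OF ex] unfolding ram_def by auto
qed

lemma trace_zero_iff:
  assumes fin: "finite (supp_ef p)"
  shows "trace_ef p = (\<lambda>_. 0) \<longleftrightarrow> (\<forall>k\<in>supp_ef p. k \<notin> \<int>)"
proof -
  note R = ram_props[OF fin]
  define w where "w k = cis (- 2 * pi * of_rat k)" for k
  have val: "trace_ef p k = (\<Sum>t<ram p. w k ^ t) * p k" for k
    unfolding trace_ef_def sigma_pow_def sum_distrib_right
  proof (intro sum.cong refl)
    fix t assume "t \<in> {..<ram p}"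
    have "w k ^ t = cis (real t * (- 2 * pi * of_rat k))" unfolding w_def by (rule Complex.DeMoivre)
    also have "real t * (- 2 * pi * of_rat k) = - 2 * pi * of_int (int t) * of_rat k" by simp
    finally show "cis (- 2 * pi * of_int (int t) * of_rat k) * p k = w k ^ t * p k" by simp
  qed
  have intc: "(\<Sum>t<ram p. w k ^ t) = of_nat (ram p)" if k: "k \<in> \<int>" for k
  proof -
    have "(- of_rat k :: real) \<in> \<int>" using k by (simp add: of_rat_Ints_iff)
    then have "cis (2 * pi * (- of_rat k)) = 1" by (rule cis_multiple_2pi)
    then have "w k = 1" unfolding w_def by simp
    then show ?thesis by simp
  qed
  have nonint: "(\<Sum>t<ram p. w k ^ t) = 0" if k: "k \<in> supp_ef p" "k \<notin> \<int>" for k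
  proof -
    have "w k \<noteq> 1"
    proof
      assume "w k = 1"
      then have "cis (- 2 * pi * of_int 1 * of_rat k) = cis (- 2 * pi * of_int 0 * of_rat k)"
        unfolding w_def by simp
      then have "of_int (1 - 0) * k \<in> \<int>" by (simp only: cis_eq_cis_iff)
      then show False using k by simp
    qed
    moreover have "w k ^ ram p = 1"
    proof -
      have "w k ^ ram p = cis (- 2 * pi * of_int (int (ram p)) * of_rat k)"
        unfolding w_def Complex.DeMoivre by (simp add: mult_ac)
      also have "\<dots> = cis (- 2 * pi * of_int 0 * of_rat k)"
        using R(2) k(1) by (subst cis_eq_cis_iff) (simp add: mult.commute)
      finally show ?thesis by simp
    qed
    ultimately show ?thesis by (simp add: sum_gp_strict)
  qed
  show ?thesis
  proof
    assume T: "trace_ef p = (\<lambda>_. 0)"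
    show "\<forall>k\<in>supp_ef p. k \<notin> \<int>"
    proof (intro ballI notI)
      fix k assume k: "k \<in> supp_ef p" "k \<in> \<int>"
      have "trace_ef p k = of_nat (ram p) * p k" using val intc[OF k(2)] by simp
      moreover have "p k \<noteq> 0" using k by (simp add: supp_ef_def)
      ultimately have "trace_ef p k \<noteq> 0" using R(1) by simp
      then show False using T by simp
    qed
  next
    assume H: "\<forall>k\<in>supp_ef p. k \<notin> \<int>"
    show "trace_ef p = (\<lambda>_. 0)"
    proof
      fix k show "trace_ef p k = 0"
      proof (cases "k \<in> supp_ef p")
        case True then show ?thesis using val nonint H by simp
      next
        case False then show ?thesis using val by (simp add: supp_ef_def)
      qed
    qed
  qed
qed

lemma Fs_mod:
  assumes r: "(r::int) > 0" and T: "\<forall>x\<in>T. of_int r * x \<in> \<int>"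
  shows "Fs T d = Fs T (d mod r)"
proof -
  have "of_int d * x \<in> \<int> \<longleftrightarrow> of_int (d mod r) * x \<in> \<int>" if x: "x \<in> T" for x
  proof -
    have "of_int d * x = of_int (d div r) * (of_int r * x) + of_int (d mod r) * x"
      by (metis (no_types, lifting) div_mult_mod_eq distrib_right mult.assoc mult.commute of_int_add of_int_mult)
    moreover have "of_int (d div r) * (of_int r * x) \<in> \<int>" using T x by simp
    ultimately show ?thesis by (metis Ints_add Ints_diff add_diff_cancel_left')
  qed
  then have "{x\<in>T. of_int d * x \<notin> \<int>} = {x\<in>T. of_int (d mod r) * x \<notin> \<int>}" by blast
  then show ?thesis by (simp only: Fs_def)
qed

lemma Levels_Fs: "Levels q = {Fs (supp_ef q) d | d. True} - {0}"
proof -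
  have q0: "sigma_pow 0 q = q" unfolding sigma_pow_def by simp
  have "{slope (q - sigma_pow i q) | i. True} = {Fs (supp_ef q) d | d. True}"
  proof (intro set_eqI iffI)
    fix y assume "y \<in> {slope (q - sigma_pow i q) | i. True}"
    then obtain i where "y = slope (sigma_pow 0 q - sigma_pow i q)" using q0 by auto
    then have "y = Fs (supp_ef q) (0 - i)" by (simp only: slope_diff)
    then show "y \<in> {Fs (supp_ef q) d | d. True}" by blast
  next
    fix y assume "y \<in> {Fs (supp_ef q) d | d. True}"
    then obtain d where "y = Fs (supp_ef q) (0 - (- d))" by auto
    then have "y = slope (sigma_pow 0 q - sigma_pow (- d) q)" by (simp only: slope_diff)
    then show "y \<in> {slope (q - sigma_pow i q) | i. True}" using q0 by auto
  qed
  then show ?thesis unfolding Levels_def by simp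
qed

lemma qa_at:
  assumes "ram q \<ge> 1" "j0 \<in> {1..sdim q}"
  shows "qa q a (of_nat j0 / of_nat (ram q)) = a j0"
proof -
  have e: "(of_nat j0 / of_nat (ram q) = (of_nat j / of_nat (ram q) :: rat)) \<longleftrightarrow> j0 = j" for j
    using assms(1) by (simp add: divide_cancel_right)
  have "qa q a (of_nat j0 / of_nat (ram q)) = (\<Sum>j\<in>{1..sdim q}. if j0 = j then a j else 0)"
    unfolding qa_def by (intro sum.cong refl) (simp only: e)
  also have "\<dots> = a j0" using assms(2) by simp
  finally show ?thesis .
qed

lemma qa_off:
  assumes "\<forall>j\<in>{1..sdim q}. x \<noteq> of_nat j / of_nat (ram q)"
  shows "qa q a x = 0"
  unfolding qa_def using assms by (intro sum.neutral) auto

lemma supp_qa: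
  assumes "ram q \<ge> 1"
  shows "supp_ef (qa q a) = (\<lambda>j. of_nat j / of_nat (ram q)) ` {j\<in>{1..sdim q}. a j \<noteq> 0}"
proof (intro set_eqI iffI)
  fix x assume x: "x \<in> supp_ef (qa q a)"
  then have "qa q a x \<noteq> 0" by (simp add: supp_ef_def)
  then obtain j where j: "j \<in> {1..sdim q}" "x = of_nat j / of_nat (ram q)" using qa_off by blast
  then have "a j \<noteq> 0" using qa_at[OF assms j(1)] \<open>qa q a x \<noteq> 0\<close> by simp
  then show "x \<in> (\<lambda>j. of_nat j / of_nat (ram q)) ` {j\<in>{1..sdim q}. a j \<noteq> 0}" using j by blast
next
  fix x :: rat assume "x \<in> (\<lambda>j. of_nat j / of_nat (ram q)) ` {j\<in>{1..sdim q}. a j \<noteq> 0}"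
  then obtain j where j: "j \<in> {1..sdim q}" "a j \<noteq> 0" "x = of_nat j / of_nat (ram q)" by blast
  then show "x \<in> supp_ef (qa q a)" using qa_at[OF assms j(1)] by (simp add: supp_ef_def)
qed

theorem mainTheorem3:
  fixes q :: "rat \<Rightarrow> complex"
  assumes "exp_factor q"
  defines "L \<equiv> Levels q"
    and "m \<equiv> card (Levels q)"
    and "K \<equiv> slope q"
  shows "Bspace q homeomorphic_space (CstarC m (card (Inc L \<inter> {0<..K}))) \<and>
         SBspace q homeomorphic_space (CstarC m (card (Inc L - \<nat>))) \<and>
         m + card (Inc L \<inter> {0<..K}) = card (A L \<inter> {0<..K}) \<and>
         m + card (Inc L - \<nat>) = card (A L - \<nat>) \<and>
         rat_of_nat (card (A L - \<nat>)) =
           (\<Sum>i = 1..m. of_int (rr L i) * klist L ! (i - 1)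
                         - of_int \<lfloor>of_int (rr L (i - 1)) * klist L ! (i - 1)\<rfloor>)"
proof -
  define S where "S = supp_ef q"
  define r where "r = ram q"
  define s where "s = sdim q"
  define P where "P = {1..s}"
  define phi where "phi j = (of_nat j / of_nat r :: rat)" for j
  have finS: "finite S" and posS: "\<forall>x\<in>S. 0 < x"
    using assms(1) unfolding exp_factor_def S_def supp_ef_def by auto
  have r1: "r \<ge> 1" and rS: "\<forall>x\<in>S. x * of_nat r \<in> \<int>"
    using ram_props[OF finS[unfolded S_def]] unfolding r_def S_def by auto
  have SK: "x \<le> K" if "x \<in> S" for x
    using that finS unfolding K_def slope_def S_def by auto
  have rK: "of_nat r * K \<in> \<int>"
  proof (cases "S = {}")
    case True then show ?thesis unfolding K_def slope_def S_def by simp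
  next
    case False
    then have "K \<in> S" using finS unfolding K_def slope_def S_def by simp
    then show ?thesis using rS by (simp add: mult.commute)
  qed
  have s_eq: "int s = \<lfloor>of_nat r * K\<rfloor>"
  proof -
    have "0 \<le> K"
    proof (cases "S = {}")
      case True then show ?thesis unfolding K_def slope_def S_def by simp
    next
      case False
      then have "K \<in> S" using finS unfolding K_def slope_def S_def by simp
      then show ?thesis using posS by force
    qed
    then show ?thesis unfolding s_def sdim_def r_def[symmetric] K_def[symmetric] by simp
  qed
  have phi_inj: "inj_on phi X" for X using r1 unfolding phi_def by (auto simp: inj_on_def)
  have phi_r: "of_nat r * phi j = of_nat j" for j using r1 unfolding phi_def by simp
  have phiP: "0 < phi j \<and> phi j \<le> K" if "j \<in> P" for j
  proof -
    have "int j \<le> \<lfloor>of_nat r * K\<rfloor>" using that s_eq unfolding P_def by simp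
    then have "(of_nat j :: rat) \<le> of_nat r * K" by (simp add: le_floor_iff)
    then have "phi j \<le> K" using r1 unfolding phi_def by (simp add: divide_le_eq mult.commute)
    moreover have "0 < phi j" using that r1 unfolding phi_def P_def by simp
    ultimately show ?thesis by simp
  qed
  have grid: "x \<in> phi ` P" if x: "0 < x" "x \<le> K" "of_nat r * x \<in> \<int>" for x
  proof -
    obtain t where t: "of_nat r * x = of_int t" using x(3) by (auto elim: Ints_cases)
    have "(0::rat) < of_nat r * x" using x r1 by simp
    then have t0: "t > 0" using t by simp
    have "of_nat r * x \<le> of_nat r * K" using x by (simp add: mult_left_mono)
    then have "t \<le> \<lfloor>of_nat r * K\<rfloor>" using t by (simp add: le_floor_iff)
    then have "nat t \<in> P" using t0 s_eq unfolding P_def by auto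
    moreover have "x = phi (nat t)" using t t0 r1 unfolding phi_def by (simp add: field_simps)
    ultimately show ?thesis by blast
  qed
  have SP: "S \<subseteq> phi ` P"
  proof
    fix x assume x: "x \<in> S"
    show "x \<in> phi ` P" using grid posS x SK rS by (simp add: mult.commute)
  qed
  have Lv: "L = {Fs S d | d. True} - {0}" unfolding L_def S_def by (rule Levels_Fs)
  have LS: "L \<subseteq> S" and FsL: "\<And>d. Fs L d = Fs S d" using levels_fs[OF finS posS Lv] by auto
  have finL: "finite L" using LS finS finite_subset by blast
  have posL: "\<forall>x\<in>L. 0 < x" using LS posS by blast
  have att: "\<forall>l\<in>L. \<exists>d. Fs L d = l" using Lv FsL by auto
  have Lnonint: "l \<notin> \<int>" if l: "l \<in> L" for l
  proof
    assume li: "l \<in> \<int>"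
    obtain d where d: "Fs S d = l" using l Lv by blast
    have "Fs S d \<noteq> 0" using d l Lv by blast
    then have "of_int d * l \<notin> \<int>" using Fs_in[OF finS] d by blast
    then show False using li by simp
  qed
  have LA: "L \<subseteq> A L"
  proof
    fix l assume l: "l \<in> L"
    have "Adm L l" unfolding Adm_def using l by blast
    then show "l \<in> A L" using Adm_iff_A[OF finL] posL l by blast
  qed
  have A_r: "of_nat r * x \<in> \<int>" if x: "x \<in> A L" for x
  proof -
    have "Adm L x" using Adm_iff_A[OF finL A_pos[OF x]] x by blast
    then have "of_int (int r) * x \<notin> \<int> \<Longrightarrow> \<exists>\<mu>\<in>L. x \<le> \<mu> \<and> of_int (int r) * \<mu> \<notin> \<int>"
      unfolding Adm_def by blast
    moreover have "\<forall>\<mu>\<in>L. of_int (int r) * \<mu> \<in> \<int>" using LS rS by (auto simp: mult.commute)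
    ultimately show ?thesis by auto
  qed
  have A_nn: "x \<le> K" if x: "x \<in> A L" "x \<notin> \<nat>" for x
  proof -
    have x0: "0 < x" using A_pos x by blast
    then have xi: "x \<notin> \<int>" using pos_Ints_Nats x by blast
    have "Adm L x" using Adm_iff_A[OF finL x0] x by blast
    then obtain \<mu> where "\<mu> \<in> L" "x \<le> \<mu>" using xi unfolding Adm_def by (metis mult_1 of_int_1)
    then show ?thesis using SK LS by force
  qed
  have LP: "L \<subseteq> phi ` P" using LS SP by blast
  have Sa: "supp_ef (qa q a) = phi ` {j\<in>P. a j \<noteq> 0}" for a
    unfolding phi_def P_def s_def r_def using supp_qa r1 r_def by blast
  have finSa: "finite (supp_ef (qa q a))" for a unfolding Sa P_def by simp
  have posSa: "\<forall>x\<in>supp_ef (qa q a). 0 < x" for a unfolding Sa using phiP by auto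
  have rSa: "\<forall>x\<in>supp_ef (qa q a). of_int (int r) * x \<in> \<int>" for a unfolding Sa using phi_r by auto
  have rS': "\<forall>x\<in>S. of_int (int r) * x \<in> \<int>" using rS by (simp add: mult.commute)
  have Bcond: "(\<forall>k l::nat. k \<le> ram q \<longrightarrow> l \<le> ram q \<longrightarrow>
       slope (sigma_pow (int k) (qa q a) - sigma_pow (int l) (qa q a))
         = slope (sigma_pow (int k) q - sigma_pow (int l) q))
     \<longleftrightarrow> (\<forall>d. Fs (supp_ef (qa q a)) d = Fs L d)" for a
  proof
    assume H: "\<forall>k l::nat. k \<le> ram q \<longrightarrow> l \<le> ram q \<longrightarrow>
       slope (sigma_pow (int k) (qa q a) - sigma_pow (int l) (qa q a))
         = slope (sigma_pow (int k) q - sigma_pow (int l) q)"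
    show "\<forall>d. Fs (supp_ef (qa q a)) d = Fs L d"
    proof
      fix d
      define k where "k = nat (d mod int r)"
      have rpos: "int r > 0" using r1 by simp
      have kr2: "int k = d mod int r" unfolding k_def using pos_mod_sign[OF rpos, of d] by simp
      have "d mod int r < int r" using pos_mod_bound[OF rpos] by simp
      then have "k \<le> ram q" using kr2 r_def by linarith
      note kr = this kr2
      have "Fs (supp_ef (qa q a)) d = Fs (supp_ef (qa q a)) (int k - int 0)"
        using Fs_mod[of "int r" _ d, OF _ rSa] r1 kr by simp
      also have "\<dots> = slope (sigma_pow (int k) (qa q a) - sigma_pow (int 0) (qa q a))"
        by (simp only: slope_diff)
      also have "\<dots> = slope (sigma_pow (int k) q - sigma_pow (int 0) q)" using H kr by blast
      also have "\<dots> = Fs S (int k - int 0)" unfolding S_def by (simp only: slope_diff)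
      also have "\<dots> = Fs S d" using Fs_mod[of "int r" S d, OF _ rS'] r1 kr by simp
      finally show "Fs (supp_ef (qa q a)) d = Fs L d" using FsL by simp
    qed
  next
    assume H: "\<forall>d. Fs (supp_ef (qa q a)) d = Fs L d"
    show "\<forall>k l::nat. k \<le> ram q \<longrightarrow> l \<le> ram q \<longrightarrow>
       slope (sigma_pow (int k) (qa q a) - sigma_pow (int l) (qa q a))
         = slope (sigma_pow (int k) q - sigma_pow (int l) q)"
      unfolding slope_diff using H FsL S_def by simp
  qed
  define X where "X j = (if phi j \<in> L then - {0} else if phi j \<in> A L then UNIV else {0::complex})" for j
  define X' where "X' j = (if phi j \<in> \<int> then {0} else X j)" for j
  have cond_iff: "(\<forall>d. Fs (supp_ef (qa q a)) d = Fs L d) \<longleftrightarrow> (\<forall>j\<in>P. a j \<in> X j)" for a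
  proof -
    have "(\<forall>d. Fs (supp_ef (qa q a)) d = Fs L d) \<longleftrightarrow> L \<subseteq> supp_ef (qa q a) \<and> (\<forall>x\<in>supp_ef (qa q a). Adm L x)"
      by (rule key_char[OF finSa posSa finL posL att])
    also have "\<dots> \<longleftrightarrow> L \<subseteq> supp_ef (qa q a) \<and> (\<forall>x\<in>supp_ef (qa q a). x \<in> A L)"
      using Adm_iff_A[OF finL] posSa by blast
    also have "\<dots> \<longleftrightarrow> (\<forall>j\<in>P. a j \<in> X j)"
    proof
      assume H: "L \<subseteq> supp_ef (qa q a) \<and> (\<forall>x\<in>supp_ef (qa q a). x \<in> A L)"
      show "\<forall>j\<in>P. a j \<in> X j"
      proof
        fix j assume j: "j \<in> P"
        have inS: "phi j \<in> supp_ef (qa q a) \<longleftrightarrow> a j \<noteq> 0"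
          unfolding Sa using j phi_inj[of UNIV] by (auto simp: inj_on_def)
        show "a j \<in> X j" using H inS unfolding X_def by auto
      qed
    next
      assume H: "\<forall>j\<in>P. a j \<in> X j"
      have inS: "phi j \<in> supp_ef (qa q a) \<longleftrightarrow> a j \<noteq> 0" if "j \<in> P" for j
        unfolding Sa using that phi_inj[of UNIV] by (auto simp: inj_on_def)
      show "L \<subseteq> supp_ef (qa q a) \<and> (\<forall>x\<in>supp_ef (qa q a). x \<in> A L)"
      proof
        show "L \<subseteq> supp_ef (qa q a)"
        proof
          fix l assume l: "l \<in> L"
          then obtain j where j: "j \<in> P" "l = phi j" using LP by blast
          then have "a j \<noteq> 0" using H l unfolding X_def by force
          then show "l \<in> supp_ef (qa q a)" using inS j by simp
        qed
        show "\<forall>x\<in>supp_ef (qa q a). x \<in> A L"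
        proof
          fix x assume x: "x \<in> supp_ef (qa q a)"
          then obtain j where j: "j \<in> P" "a j \<noteq> 0" "x = phi j" unfolding Sa by blast
          then show "x \<in> A L" using H LA unfolding X_def by (auto split: if_splits)
        qed
      qed
    qed
    finally show ?thesis .
  qed
  have Bset: "B_set q = PiE P X"
  proof -
    have "B_set q = {a \<in> PiE P (\<lambda>_. UNIV). \<forall>j\<in>P. a j \<in> X j}"
      unfolding B_set_def P_def[symmetric] s_def[symmetric] Bcond cond_iff ..
    also have "\<dots> = PiE P X" by (auto simp: PiE_iff extensional_def)
    finally show ?thesis .
  qed
  have SBset: "SB_set q = PiE P X'"
  proof -
    have tr: "trace_ef (qa q a) = (\<lambda>_. 0) \<longleftrightarrow> (\<forall>j\<in>P. phi j \<in> \<int> \<longrightarrow> a j = 0)" for a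
      unfolding trace_zero_iff[OF finSa] Sa by auto
    have z: "\<And>j. phi j \<in> \<int> \<Longrightarrow> 0 \<in> X j" using Lnonint unfolding X_def by auto
    have eqX': "{a \<in> PiE P X. \<forall>j\<in>P. phi j \<in> \<int> \<longrightarrow> a j = 0} = PiE P X'"
    proof (intro set_eqI iffI)
      fix a assume "a \<in> {a \<in> PiE P X. \<forall>j\<in>P. phi j \<in> \<int> \<longrightarrow> a j = 0}"
      then show "a \<in> PiE P X'" unfolding X'_def by (auto simp: PiE_iff)
    next
      fix a assume a: "a \<in> PiE P X'"
      then have "a \<in> PiE P X" using z unfolding X'_def PiE_iff by (metis singletonD)
      then show "a \<in> {a \<in> PiE P X. \<forall>j\<in>P. phi j \<in> \<int> \<longrightarrow> a j = 0}"
        using a unfolding X'_def PiE_iff by auto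
    qed
    have "SB_set q = {a \<in> PiE P X. \<forall>j\<in>P. phi j \<in> \<int> \<longrightarrow> a j = 0}"
      unfolding SB_set_def Bset tr ..
    also note eqX'
    finally show ?thesis .
  qed
  define Lj where "Lj = {j\<in>P. phi j \<in> L}"
  define Fj where "Fj = {j\<in>P. phi j \<in> A L \<and> phi j \<notin> L}"
  define Fj' where "Fj' = {j\<in>P. phi j \<in> A L \<and> phi j \<notin> L \<and> phi j \<notin> \<int>}"
  have finP: "finite P" unfolding P_def by simp
  have imL: "phi ` Lj = L" unfolding Lj_def using LP by auto
  have imF: "phi ` Fj = Inc L \<inter> {0<..K}"
  proof (intro set_eqI iffI)
    fix x assume "x \<in> phi ` Fj"
    then show "x \<in> Inc L \<inter> {0<..K}" unfolding Fj_def Inc_def using phiP by auto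
  next
    fix x assume x: "x \<in> Inc L \<inter> {0<..K}"
    then have "x \<in> phi ` P" using grid A_r unfolding Inc_def by auto
    then show "x \<in> phi ` Fj" using x unfolding Fj_def Inc_def by auto
  qed
  have imF': "phi ` Fj' = Inc L - \<nat>"
  proof (intro set_eqI iffI)
    fix x assume "x \<in> phi ` Fj'"
    then obtain j where j: "j \<in> Fj'" "x = phi j" by blast
    then have "x \<notin> \<nat>" using pos_Ints_Nats phiP unfolding Fj'_def by auto
    then show "x \<in> Inc L - \<nat>" using j unfolding Fj'_def Inc_def by auto
  next
    fix x assume x: "x \<in> Inc L - \<nat>"
    then have xA: "x \<in> A L" "x \<notin> \<nat>" unfolding Inc_def by auto
    then have "x \<in> phi ` P" using grid A_r A_pos A_nn by blast
    moreover have "x \<notin> \<int>" using xA A_pos pos_Ints_Nats by blast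
    ultimately show "x \<in> phi ` Fj'" using x unfolding Fj'_def Inc_def by auto
  qed
  have cLj: "card Lj = m" unfolding m_def L_def[symmetric] imL[symmetric]
    by (rule card_image[symmetric]) (rule phi_inj)
  have cFj: "card Fj = card (Inc L \<inter> {0<..K})" unfolding imF[symmetric]
    by (rule card_image[symmetric]) (rule phi_inj)
  have cFj': "card Fj' = card (Inc L - \<nat>)" unfolding imF'[symmetric]
    by (rule card_image[symmetric]) (rule phi_inj)
  have H1: "Bspace q homeomorphic_space CstarC (card Lj) (card Fj)"
    unfolding Bspace_def Bset s_def[symmetric] P_def[symmetric]
  proof (rule prod_homeo[OF finP])
    show "Lj \<subseteq> P" "Fj \<subseteq> P" "Lj \<inter> Fj = {}" unfolding Lj_def Fj_def by auto
    show "\<And>j. j \<in> Lj \<Longrightarrow> X j = - {0}" unfolding Lj_def X_def by auto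
    show "\<And>j. j \<in> Fj \<Longrightarrow> X j = UNIV" unfolding Fj_def X_def by auto
    show "\<And>j. j \<in> P \<Longrightarrow> j \<notin> Lj \<Longrightarrow> j \<notin> Fj \<Longrightarrow> X j = {0}" unfolding Lj_def Fj_def X_def by auto
  qed
  have H2: "SBspace q homeomorphic_space CstarC (card Lj) (card Fj')"
    unfolding SBspace_def SBset s_def[symmetric] P_def[symmetric]
  proof (rule prod_homeo[OF finP])
    show "Lj \<subseteq> P" "Fj' \<subseteq> P" "Lj \<inter> Fj' = {}" unfolding Lj_def Fj'_def by auto
    show "\<And>j. j \<in> Lj \<Longrightarrow> X' j = - {0}" unfolding Lj_def X'_def X_def using Lnonint by auto
    show "\<And>j. j \<in> Fj' \<Longrightarrow> X' j = UNIV" unfolding Fj'_def X'_def X_def by auto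
    show "\<And>j. j \<in> P \<Longrightarrow> j \<notin> Lj \<Longrightarrow> j \<notin> Fj' \<Longrightarrow> X' j = {0}" unfolding Lj_def Fj'_def X'_def X_def by auto
  qed
  have "finite (phi ` Fj)" using finP unfolding Fj_def by simp
  then have finIK: "finite (Inc L \<inter> {0<..K})" unfolding imF .
  have "finite (phi ` Fj')" using finP unfolding Fj'_def by simp
  then have finIN: "finite (Inc L - \<nat>)" unfolding imF' .
  have LK: "L \<subseteq> {0<..K}" using LS posS SK by auto
  have C3: "m + card (Inc L \<inter> {0<..K}) = card (A L \<inter> {0<..K})"
  proof -
    have "A L \<inter> {0<..K} = L \<union> (Inc L \<inter> {0<..K})" using LA LK unfolding Inc_def by auto
    moreover have "L \<inter> (Inc L \<inter> {0<..K}) = {}" unfolding Inc_def by auto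
    ultimately show ?thesis using card_Un_disjoint[OF finL finIK] unfolding m_def L_def by simp
  qed
  have C4: "m + card (Inc L - \<nat>) = card (A L - \<nat>)"
  proof -
    have LN: "L \<inter> \<nat> = {}" using Lnonint Nats_subset_Ints by blast
    have "A L - \<nat> = L \<union> (Inc L - \<nat>)" using LA LN unfolding Inc_def by auto
    moreover have "L \<inter> (Inc L - \<nat>) = {}" unfolding Inc_def by auto
    ultimately show ?thesis using card_Un_disjoint[OF finL finIN] unfolding m_def L_def by simp
  qed
  have C5: "rat_of_nat (card (A L - \<nat>)) =
           (\<Sum>i = 1..m. of_int (rr L i) * klist L ! (i - 1)
                         - of_int \<lfloor>of_int (rr L (i - 1)) * klist L ! (i - 1)\<rfloor>)"
    unfolding m_def L_def[symmetric] by (rule count_formula[OF finL posL])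
  show ?thesis using H1 H2 C3 C4 C5 unfolding cLj cFj cFj' by blast
qed

end
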